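(* Let $M>0$, $\delta_0>0$ and $l_0\in\mathbb{R}$, and let $w_0\in L^\infty((-\infty,l_0])$ satisfy $w_0(x)=0$ for all sufficiently large negative $x$. Let $w$ be the (bounded) solution of $w_t=w_{xx}-Mw_x^2$ for $x<l_0$, $t>0$, with $w(x,0)=w_0(x)$ for $x\le l_0$ and $w(l_0,t)=\delta_0$ for $t\ge0$. Then $w(x,t)\to\delta_0$ as $t\to\infty$ locally uniformly in $x\in(-\infty,l_0]$. *)

theory Defs
  imports "HOL-Analysis.Analysis"
begin

end

theory Submission
  imports Defs
begin

lemma max_principle:
  fixes z zt zx zxx :: "real \<Rightarrow> real \<Rightarrow> real" and xL xR tI T :: real
  assumes x12: "xL < xR"
  and cont: "continuous_on ({xL..xR} \<times> {tI..T}) (\<lambda>(x,t). z x t)"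
  and dt: "\<And>x t. xL < x \<Longrightarrow> x < xR \<Longrightarrow> tI < t \<Longrightarrow> t \<le> T \<Longrightarrow> ((\<lambda>s. z x s) has_real_derivative zt x t) (at t)"
  and dx: "\<And>x t. xL < x \<Longrightarrow> x < xR \<Longrightarrow> tI < t \<Longrightarrow> t \<le> T \<Longrightarrow> ((\<lambda>y. z y t) has_real_derivative zx x t) (at x)"
  and dxx: "\<And>x t. xL < x \<Longrightarrow> x < xR \<Longrightarrow> tI < t \<Longrightarrow> t \<le> T \<Longrightarrow> ((\<lambda>y. zx y t) has_real_derivative zxx x t) (at x)"
  and heat: "\<And>x t. xL < x \<Longrightarrow> x < xR \<Longrightarrow> tI < t \<Longrightarrow> t \<le> T \<Longrightarrow> zt x t = zxx x t"
  and b1: "\<And>t. tI \<le> t \<Longrightarrow> t \<le> T \<Longrightarrow> z xL t \<le> 0"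
  and b2: "\<And>t. tI \<le> t \<Longrightarrow> t \<le> T \<Longrightarrow> z xR t \<le> 0"
  and b0: "\<And>x. xL \<le> x \<Longrightarrow> x \<le> xR \<Longrightarrow> z x tI \<le> 0"
  and p: "xL \<le> p" "p \<le> xR" and q: "tI \<le> q" "q \<le> T"
  shows "z p q \<le> 0"
proof (rule ccontr)
  assume "\<not> z p q \<le> 0"
  hence zpq: "z p q > 0" by simp
  define e where "e = z p q / (2*(T - tI + 1))"
  have Tt0: "T - tI \<ge> 0" using q by simp
  have epos: "e > 0" unfolding e_def using zpq Tt0 by simp
  have eT: "e * (T - tI) < z p q"
  proof -
    have "e * (T - tI) = z p q * ((T - tI) / (2*(T - tI + 1)))" unfolding e_def by (simp add: field_simps)
    also have "\<dots> < z p q * 1" using zpq Tt0 by (intro mult_strict_left_mono) (auto simp: field_simps)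
    finally show ?thesis by simp
  qed
  define S where "S = {xL..xR} \<times> {tI..T}"
  define g where "g = (\<lambda>(x::real,t::real). z x t - e*(t - tI))"
  have gc: "continuous_on S g"
  proof -
    have "continuous_on S (\<lambda>y. ((\<lambda>(x,t). z x t) y) - e*(snd y - tI))"
      unfolding S_def by (intro continuous_on_diff cont continuous_intros)
    moreover have "(\<lambda>y. ((\<lambda>(x,t). z x t) y) - e*(snd y - tI)) = g" unfolding g_def by auto
    ultimately show ?thesis by metis
  qed
  have "compact S" unfolding S_def by (intro compact_Times compact_Icc)
  moreover have "S \<noteq> {}" using p q unfolding S_def by auto
  ultimately obtain m where mS: "m \<in> S" and mmax: "\<forall>y\<in>S. g y \<le> g m"
    using continuous_attains_sup[OF _ _ gc] by blast
  obtain xs ts where m: "m = (xs, ts)" by fastforce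
  have xsr: "xL \<le> xs" "xs \<le> xR" and tsr: "tI \<le> ts" "ts \<le> T" using mS m S_def by auto
  have max: "\<And>x t. xL \<le> x \<Longrightarrow> x \<le> xR \<Longrightarrow> tI \<le> t \<Longrightarrow> t \<le> T \<Longrightarrow> z x t - e*(t-tI) \<le> z xs ts - e*(ts - tI)"
    using mmax m unfolding S_def g_def by auto
  have gpos: "z xs ts - e*(ts - tI) > 0"
    using max[OF p q] eT q epos
    by (smt (verit, best) mult_left_mono)
  have ets: "e*(ts - tI) \<ge> 0" using epos tsr by simp
  have "xs \<noteq> xL" using b1[OF tsr] gpos ets by auto
  moreover have "xs \<noteq> xR" using b2[OF tsr] gpos ets by auto
  moreover have "ts \<noteq> tI" using b0[OF xsr] gpos by auto
  ultimately have xsi: "xL < xs" "xs < xR" and tsi: "tI < ts" using xsr tsr by auto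
  have zt_ge: "zt xs ts \<ge> e"
  proof (rule ccontr)
    assume "\<not> ?thesis"
    hence neg: "zt xs ts - e < 0" by simp
    have "((\<lambda>s. z xs s - e*(s - tI)) has_real_derivative (zt xs ts - e*1)) (at ts)"
      using dt[OF xsi tsi tsr(2)] by (auto intro!: derivative_eq_intros)
    from DERIV_neg_dec_left[OF this] neg obtain d where d: "d > 0"
      and dd: "\<forall>h>0. h < d \<longrightarrow> z xs ts - e*(ts - tI) < z xs (ts - h) - e*(ts - h - tI)" by auto
    define h where "h = min (d/2) ((ts - tI)/2)"
    have "h > 0" "h < d" using d tsi unfolding h_def by auto
    with dd have "z xs ts - e*(ts - tI) < z xs (ts - h) - e*(ts - h - tI)" by blast
    moreover have "z xs (ts - h) - e*(ts - h - tI) \<le> z xs ts - e*(ts - tI)"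
      using tsr \<open>h > 0\<close> min.cobounded2[of "d/2" "(ts-tI)/2"] unfolding h_def[symmetric] by (intro max[OF xsr]) (auto simp: field_simps)
    ultimately show False by simp
  qed
  have Fmax: "\<And>y. \<bar>xs - y\<bar> < min (xs - xL) (xR - xs) \<Longrightarrow> z y ts \<le> z xs ts"
    using max[OF _ _ tsr] by force
  have zx0: "zx xs ts = 0"
    using DERIV_local_max[OF dx[OF xsi tsi tsr(2)], of "min (xs - xL) (xR - xs)"] Fmax xsi by auto
  have zxx_le: "zxx xs ts \<le> 0"
  proof (rule ccontr)
    assume "\<not> ?thesis"
    hence "zxx xs ts > 0" by simp
    from DERIV_pos_inc_right[OF dxx[OF xsi tsi tsr(2)] this] zx0 obtain d where d: "d > 0"
      and dd: "\<forall>h>0. h < d \<longrightarrow> 0 < zx (xs + h) ts" by auto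
    define h where "h = min d (xR - xs) / 2"
    have h: "h > 0" "h < d" "xs + h < xR" using d xsi unfolding h_def by (auto simp: min_def field_simps)
    have "\<exists>\<xi>>xs. \<xi> < xs + h \<and> z (xs + h) ts - z xs ts = (xs + h - xs) * zx \<xi> ts"
      by (rule MVT2) (use h xsi in \<open>auto intro!: dx tsi tsr\<close>)
    then obtain \<xi> where xi: "\<xi> > xs" "\<xi> < xs + h" and eq: "z (xs + h) ts - z xs ts = h * zx \<xi> ts" by auto
    have "0 < zx \<xi> ts" using dd[rule_format, of "\<xi> - xs"] xi h by auto
    hence "z (xs + h) ts > z xs ts" using eq h by (smt (verit) mult_pos_pos)
    moreover have "z (xs + h) ts \<le> z xs ts" using max[OF _ _ tsr, of "xs + h"] h xsi by auto
    ultimately show False by simp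
  qed
  show False using heat[OF xsi tsi tsr(2)] zt_ge zxx_le epos by simp
qed

theorem lemma3p3:
  fixes M \<delta>0 l0 :: real
    and w0 :: "real \<Rightarrow> real"
    and w wt wx wxx :: "real \<Rightarrow> real \<Rightarrow> real"
  assumes M_pos: "M > 0" and delta_pos: "\<delta>0 > 0"
    and w0_meas: "w0 \<in> borel_measurable lborel"
    and w0_bdd: "\<exists>C. \<forall>x\<le>l0. \<bar>w0 x\<bar> \<le> C"
    and w0_zero: "\<exists>L. \<forall>x\<le>L. w0 x = 0"
    and w_bdd: "\<exists>B. \<forall>x\<le>l0. \<forall>t\<ge>0. \<bar>w x t\<bar> \<le> B"
    and w_cont: "continuous_on ({..l0} \<times> {0<..}) (\<lambda>(x,t). w x t)"
    and wt_cont: "continuous_on ({..<l0} \<times> {0<..}) (\<lambda>(x,t). wt x t)"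
    and wx_cont: "continuous_on ({..<l0} \<times> {0<..}) (\<lambda>(x,t). wx x t)"
    and wxx_cont: "continuous_on ({..<l0} \<times> {0<..}) (\<lambda>(x,t). wxx x t)"
    and dt: "\<And>x t. x < l0 \<Longrightarrow> t > 0 \<Longrightarrow> ((\<lambda>s. w x s) has_real_derivative wt x t) (at t)"
    and dx: "\<And>x t. x < l0 \<Longrightarrow> t > 0 \<Longrightarrow> ((\<lambda>y. w y t) has_real_derivative wx x t) (at x)"
    and dxx: "\<And>x t. x < l0 \<Longrightarrow> t > 0 \<Longrightarrow> ((\<lambda>y. wx y t) has_real_derivative wxx x t) (at x)"
    and pde: "\<And>x t. x < l0 \<Longrightarrow> t > 0 \<Longrightarrow> wt x t = wxx x t - M * (wx x t)\<^sup>2"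
    and init: "\<And>x. x \<le> l0 \<Longrightarrow> w x 0 = w0 x"
    and init_trace: "\<And>a b. a \<le> b \<Longrightarrow> b \<le> l0 \<Longrightarrow>
        ((\<lambda>t. LBINT x:{a..b}. \<bar>w x t - w0 x\<bar>) \<longlongrightarrow> 0) (at_right 0)"
    and bdry: "\<And>t. t > 0 \<Longrightarrow> w l0 t = \<delta>0"
  shows "\<And>a. a \<le> l0 \<Longrightarrow> uniform_limit {a..l0} (\<lambda>t x. w x t) (\<lambda>x. \<delta>0) at_top"
  proof -
  fix a assume ha: "a \<le> l0"
  obtain B where hB: "\<And>x t. x \<le> l0 \<Longrightarrow> t \<ge> 0 \<Longrightarrow> \<bar>w x t\<bar> \<le> B" using w_bdd by blast
  have hd: "\<bar>\<delta>0\<bar> \<le> B" using hB[of l0 1] bdry[of 1] by simp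
  define v where "v = (\<lambda>x t. exp (-M * w x t))"
  define c where "c = exp (-M * \<delta>0)"
  define K where "K = exp (M * B)"
  define m where "m = exp (-M * B)"
  have Kpos: "K > 0" and mpos: "m > 0" unfolding K_def m_def by auto
  have vK: "\<And>x t. x \<le> l0 \<Longrightarrow> t \<ge> 0 \<Longrightarrow> m \<le> v x t \<and> v x t \<le> K"
  proof -
    fix x t :: real assume "x \<le> l0" "t \<ge> 0"
    from hB[OF this] have "- w x t \<le> B" "w x t \<le> B" by (auto simp: abs_le_iff)
    hence "-M * w x t \<le> M * B" "-M * B \<le> -M * w x t"
      using mult_left_mono[of "- w x t" B M] mult_left_mono[of "w x t" B M] M_pos by auto
    thus "m \<le> v x t \<and> v x t \<le> K" unfolding v_def K_def m_def by auto
  qed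
  have cK: "m \<le> c \<and> c \<le> K"
  proof -
    from hd have "- \<delta>0 \<le> B" "\<delta>0 \<le> B" by (auto simp: abs_le_iff)
    hence "-M * \<delta>0 \<le> M * B" "-M * B \<le> -M * \<delta>0"
      using mult_left_mono[of "- \<delta>0" B M] mult_left_mono[of "\<delta>0" B M] M_pos by auto
    thus ?thesis unfolding c_def K_def m_def by auto
  qed
  have vcK: "\<And>x t. x \<le> l0 \<Longrightarrow> t \<ge> 0 \<Longrightarrow> \<bar>v x t - c\<bar> \<le> K"
  proof -
    fix x t :: real assume "x \<le> l0" "t \<ge> 0"
    from vK[OF this] cK mpos show "\<bar>v x t - c\<bar> \<le> K" by (simp add: abs_le_iff)
  qed
  define phi where "phi = (\<lambda>R x t. K*(l0-x)/R + 2*K*exp(-((pi/(3*R))^2)*(t-1)) * cos(pi/(3*R)*(l0-x)))"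
  have cmp: "s*(v x t - c) \<le> phi R x t"
    if s: "s = 1 \<or> s = -1" and R: "R > 0" and x: "l0 - R \<le> x" "x \<le> l0" and t: "1 \<le> t" for s R x t
  proof -
    define om where "om = pi/(3*R)"
    have om: "om > 0" unfolding om_def using R by simp
    have phi_eq: "\<And>x t. phi R x t = K*(l0-x)/R + 2*K*exp(-(om^2)*(t-1)) * cos(om*(l0-x))"
      unfolding phi_def om_def by simp
    have cosge: "cos (om*(l0-y)) \<ge> 1/2" if "l0 - R \<le> y" "y \<le> l0" for y
    proof -
      have "om*(l0-y) \<le> om * R" using that om by (intro mult_left_mono) auto
      also have "om * R = pi/3" unfolding om_def using R by simp
      finally have "cos (pi/3) \<le> cos (om*(l0-y))"
        using that om by (intro cos_monotone_0_pi_le) auto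
      thus ?thesis by (simp add: cos_60)
    qed
    have phige: "phi R y t' \<ge> K*(l0-y)/R + K*exp(-(om^2)*(t'-1))" if "l0 - R \<le> y" "y \<le> l0" for y t'
    proof -
      have "2*K*exp(-(om^2)*(t'-1)) * cos(om*(l0-y)) \<ge> 2*K*exp(-(om^2)*(t'-1)) * (1/2)"
        using cosge[OF that] Kpos by (intro mult_left_mono) auto
      thus ?thesis unfolding phi_eq by simp
    qed
    define z where "z = (\<lambda>x t. s*(exp (-M * w x t) - c) - phi R x t)"
    have "z x t \<le> 0"
    proof (rule max_principle[where xL = "l0 - R" and xR = l0 and tI = 1 and T = t and z = z,
        where zt = "\<lambda>x t. s*(exp(-M*w x t)*(-M*wt x t)) - 2*K*exp(-(om^2)*(t-1)) * (-(om^2)) * cos(om*(l0-x))"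
          and zx = "\<lambda>x t. s*(exp(-M*w x t)*(-M*wx x t)) - (-K/R + 2*K*exp(-(om^2)*(t-1))*(om * sin(om*(l0-x))))"
          and zxx = "\<lambda>x t. s*(exp(-M*w x t)*((-M*wx x t)*(-M*wx x t)) + exp(-M*w x t)*(-M*wxx x t)) - 2*K*exp(-(om^2)*(t-1))*(om*(cos(om*(l0-x))*(-om)))"])
      show "l0 - R < l0" using R by simp
      show "l0 - R \<le> x" "x \<le> l0" "1 \<le> t" "t \<le> t" using x t by auto
      show "continuous_on ({l0 - R..l0} \<times> {1..t}) (\<lambda>(x, t). z x t)"
      proof -
        have sub: "{l0 - R..l0} \<times> {1..t} \<subseteq> {..l0} \<times> {0<..}" by auto
        have wc: "continuous_on ({l0 - R..l0} \<times> {1..t}) (\<lambda>p. w (fst p) (snd p))"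
          using continuous_on_subset[OF w_cont sub] by (simp add: case_prod_unfold)
        have "continuous_on ({l0 - R..l0} \<times> {1..t}) (\<lambda>p. s*(exp(-M * w (fst p) (snd p)) - c)
            - (K*(l0-fst p)/R + 2*K*exp(-(om^2)*(snd p-1)) * cos(om*(l0-fst p))))"
          by (intro continuous_intros wc) (use R in auto)
        moreover have "(\<lambda>p. s*(exp(-M * w (fst p) (snd p)) - c)
            - (K*(l0-fst p)/R + 2*K*exp(-(om^2)*(snd p-1)) * cos(om*(l0-fst p)))) = (\<lambda>(x, t). z x t)"
          by (auto simp: z_def phi_eq case_prod_unfold)
        ultimately show ?thesis by metis
      qed
      show "((\<lambda>s. z y s) has_real_derivative
          s*(exp(-M*w y t')*(-M*wt y t')) - 2*K*exp(-(om^2)*(t'-1)) * (-(om^2)) * cos(om*(l0-y))) (at t')"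
        if "l0 - R < y" "y < l0" "1 < t'" "t' \<le> t" for y t'
        unfolding z_def phi_eq using that
        by (auto intro!: derivative_eq_intros dt)
      show "((\<lambda>x. z x t') has_real_derivative
          s*(exp(-M*w y t')*(-M*wx y t')) - (-K/R + 2*K*exp(-(om^2)*(t'-1))*(om * sin(om*(l0-y))))) (at y)"
        if "l0 - R < y" "y < l0" "1 < t'" "t' \<le> t" for y t'
        unfolding z_def phi_eq using that
        by (auto intro!: derivative_eq_intros dx)
      show "((\<lambda>x. s*(exp(-M*w x t')*(-M*wx x t')) - (-K/R + 2*K*exp(-(om^2)*(t'-1))*(om * sin(om*(l0-x))))) has_real_derivative
          s*(exp(-M*w y t')*((-M*wx y t')*(-M*wx y t')) + exp(-M*w y t')*(-M*wxx y t')) - 2*K*exp(-(om^2)*(t'-1))*(om*(cos(om*(l0-y))*(-om)))) (at y)"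
        if "l0 - R < y" "y < l0" "1 < t'" "t' \<le> t" for y t'
        using that
        by (auto intro!: derivative_eq_intros dx dxx simp: algebra_simps)
      show "s*(exp(-M*w y t')*(-M*wt y t')) - 2*K*exp(-(om^2)*(t'-1)) * (-(om^2)) * cos(om*(l0-y))
          = s*(exp(-M*w y t')*((-M*wx y t')*(-M*wx y t')) + exp(-M*w y t')*(-M*wxx y t')) - 2*K*exp(-(om^2)*(t'-1))*(om*(cos(om*(l0-y))*(-om)))"
        if "l0 - R < y" "y < l0" "1 < t'" "t' \<le> t" for y t'
      proof -
        have e1: "wxx y t' = wt y t' + M*(wx y t')^2" using pde that by simp
        show ?thesis unfolding e1 by (simp add: algebra_simps power2_eq_square)
      qed
      show "z (l0 - R) t' \<le> 0" if "1 \<le> t'" "t' \<le> t" for t'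
      proof -
        have "s*(v (l0-R) t' - c) \<le> K" using vcK[of "l0 - R" t'] that R s by (auto simp: abs_le_iff)
        moreover have "phi R (l0-R) t' \<ge> K"
        proof -
          have a1: "phi R (l0-R) t' \<ge> K*(l0-(l0-R))/R + K*exp(-(om^2)*(t'-1))" using R by (intro phige) auto
          have a2: "K*(l0-(l0-R))/R = K" using R by simp
          have a3: "K*exp(-(om^2)*(t'-1)) > 0" using Kpos by simp
          from a1 a2 a3 show ?thesis by linarith
        qed
        ultimately show ?thesis unfolding z_def v_def by simp
      qed
      show "z l0 t' \<le> 0" if "1 \<le> t'" "t' \<le> t" for t'
      proof -
        have "w l0 t' = \<delta>0" using bdry that by simp
        moreover have "phi R l0 t' \<ge> 0"
        proof -
          have a1: "phi R l0 t' \<ge> K*(l0-l0)/R + K*exp(-(om^2)*(t'-1))" using R by (intro phige) auto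
          have a3: "K*exp(-(om^2)*(t'-1)) > 0" using Kpos by simp
          from a1 a3 show ?thesis by simp
        qed
        ultimately show ?thesis unfolding z_def c_def by simp
      qed
      show "z y 1 \<le> 0" if "l0 - R \<le> y" "y \<le> l0" for y
      proof -
        have "s*(v y 1 - c) \<le> K" using vcK[of y 1] that s by (auto simp: abs_le_iff)
        moreover have "phi R y 1 \<ge> K"
        proof -
          have a1: "phi R y 1 \<ge> K*(l0-y)/R + K*exp(-(om^2)*(1-1))" using phige[OF that] .
          have a2: "K*(l0-y)/R \<ge> 0" using R Kpos that by simp
          from a1 a2 show ?thesis by simp
        qed
        ultimately show ?thesis unfolding z_def v_def by simp
      qed
    qed
    thus ?thesis unfolding z_def v_def by simp
  qed
  have logb: "\<bar>w x t - \<delta>0\<bar> \<le> \<bar>v x t - c\<bar> / (m * M)" if "x \<le> l0" "t \<ge> 0" for x t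
  proof -
    have vm: "m \<le> v x t" and vpos: "v x t > 0" using vK[OF that] mpos by auto
    have cm: "m \<le> c" and cpos: "c > 0" using cK mpos by auto
    have l1: "ln c - ln (v x t) \<le> \<bar>v x t - c\<bar> / m"
    proof -
      have "ln c - ln (v x t) \<le> (c - v x t) / v x t" using ln_diff_le[OF cpos vpos] .
      also have "\<dots> \<le> \<bar>v x t - c\<bar> / m" using vm mpos by (intro frac_le) auto
      finally show ?thesis .
    qed
    have l2: "ln (v x t) - ln c \<le> \<bar>v x t - c\<bar> / m"
    proof -
      have "ln (v x t) - ln c \<le> (v x t - c) / c" using ln_diff_le[OF vpos cpos] .
      also have "\<dots> \<le> \<bar>v x t - c\<bar> / m" using cm mpos by (intro frac_le) auto
      finally show ?thesis .
    qed
    have wv: "w x t = - ln (v x t) / M" unfolding v_def using M_pos by simp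
    have dc: "\<delta>0 = - ln c / M" unfolding c_def using M_pos by simp
    have "\<bar>w x t - \<delta>0\<bar> = \<bar>ln c - ln (v x t)\<bar> / M" unfolding wv dc using M_pos
      by (simp add: field_simps abs_div)
    also have "\<dots> \<le> (\<bar>v x t - c\<bar> / m) / M" using l1 l2 M_pos by (intro divide_right_mono) auto
    finally show ?thesis by (simp add: field_simps)
  qed
  show "uniform_limit {a..l0} (\<lambda>t x. w x t) (\<lambda>x. \<delta>0) at_top"
  proof (rule uniform_limitI)
    fix \<epsilon> :: real assume ep: "\<epsilon> > 0"
    define \<eta> where "\<eta> = \<epsilon> * m * M"
    have etapos: "\<eta> > 0" unfolding \<eta>_def using ep mpos M_pos by simp
    define R where "R = (l0 - a + 1) * (1 + 4*K/\<eta>)"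
    have q1: "1 + 4*K/\<eta> \<ge> 1" using Kpos etapos by simp
    have Rpos: "R > 0" unfolding R_def using ha q1 by simp
    have Rge: "R \<ge> l0 - a + 1" unfolding R_def using ha q1
      by (metis mult_left_mono mult.right_neutral add_nonneg_nonneg diff_ge_0_iff_ge zero_le_one)
    have RK: "K*(l0-a)/R < \<eta>/4"
    proof -
      have "K*(l0-a)/R \<le> K*(l0-a+1)/R" using Kpos Rpos by (intro divide_right_mono) auto
      also have "\<dots> = K/(1 + 4*K/\<eta>)" unfolding R_def using ha by simp
      also have "\<dots> = K*\<eta>/(\<eta> + 4*K)" using etapos Kpos by (simp add: field_simps)
      also have "\<dots> < \<eta>/4" using etapos Kpos by (simp add: field_simps)
      finally show ?thesis .
    qed
    define om where "om = pi/(3*R)"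
    have om: "om > 0" unfolding om_def using Rpos by simp
    define N where "N = max 1 (1 + ln (4*K/\<eta>)/om^2)"
    have expb: "2*K*exp(-(om^2)*(t-1)) \<le> \<eta>/2" if "t \<ge> N" for t
    proof -
      have "ln (4*K/\<eta>)/om^2 \<le> t - 1" using that unfolding N_def by simp
      hence "ln (4*K/\<eta>) \<le> om^2 * (t-1)" using om by (simp add: field_simps)
      hence "exp(-(om^2)*(t-1)) \<le> exp(- ln (4*K/\<eta>))" by simp
      also have "\<dots> = \<eta>/(4*K)" using Kpos etapos by (simp add: exp_minus)
      finally have "exp(-(om^2)*(t-1)) \<le> \<eta>/(4*K)" .
      hence "2*K*exp(-(om^2)*(t-1)) \<le> 2*K*(\<eta>/(4*K))" using Kpos by (intro mult_left_mono) auto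
      also have "\<dots> = \<eta>/2" using Kpos by simp
      finally show ?thesis .
    qed
    show "\<forall>\<^sub>F t in at_top. \<forall>x\<in>{a..l0}. dist (w x t) \<delta>0 < \<epsilon>"
      unfolding eventually_at_top_linorder
    proof (intro exI allI impI ballI)
      fix t x assume tN: "t \<ge> N" and x: "x \<in> {a..l0}"
      have t1: "t \<ge> 1" using tN unfolding N_def by simp
      have xr: "l0 - R \<le> x" "x \<le> l0" using x Rge by auto
      have up: "1*(v x t - c) \<le> phi R x t" by (rule cmp) (use Rpos xr t1 in auto)
      have lo: "(-1)*(v x t - c) \<le> phi R x t" by (rule cmp) (use Rpos xr t1 in auto)
      have ph: "phi R x t \<le> K*(l0-x)/R + 2*K*exp(-(om^2)*(t-1))"
      proof -
        have "2*K*exp(-(om^2)*(t-1)) * cos(om*(l0-x)) \<le> 2*K*exp(-(om^2)*(t-1)) * 1"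
          using Kpos by (intro mult_left_mono) auto
        thus ?thesis unfolding phi_def om_def by simp
      qed
      have kx: "K*(l0-x)/R \<le> K*(l0-a)/R" using x Kpos Rpos by (intro divide_right_mono) auto
      have "phi R x t < \<eta>" using ph kx RK expb[OF tN] etapos by linarith
      hence "\<bar>v x t - c\<bar> < \<eta>" using up lo by (simp add: abs_less_iff)
      hence "\<bar>v x t - c\<bar> / (m * M) < \<eta> / (m * M)" using mpos M_pos by (intro divide_strict_right_mono) auto
      also have "\<eta> / (m * M) = \<epsilon>" unfolding \<eta>_def using mpos M_pos by simp
      finally show "dist (w x t) \<delta>0 < \<epsilon>" using logb[of x t] xr t1 by (simp add: dist_real_def)
    qed
  qed
qed

end
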